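(* Let $R$ be a commutative ring with unit, $X$ a set, $F\subseteq R\langle X\rangle$ and $f\in(F)$, the two-sided ideal generated by $F$. Then for every labelled quiver $Q$ with labels $X$ such that all elements of $F$ are uniformly compatible with $Q$, we have: $f$ is compatible with $Q$ if and only if $f$ is a $Q$-consequence of $F$.
   Context: $R\langle X\rangle$ is the free algebra of noncommutative polynomials over $R$ in indeterminates $X$, with monomials the words in $\langle X\rangle$ (including the empty word $1$); $\operatorname{supp}(f)$ is the set of monomials with nonzero coefficient. A labelled quiver $Q=(V,E,X,s,t,l)$ has vertices $V$, edges $E$, source/target maps $s,t:E\to V$ and labelling $l:E\to X$. A nonempty path $p=e_n\cdots e_1$ (with $s(e_{i+1})=t(e_i)$) has label $l(e_n)\cdots l(e_1)$, source $s(e_1)$, target $t(e_n)$; each vertex $v$ has an empty path with label $1$ and source and target $v$. For a monomial $m$, $\sigma(m)=\{(s(p),t(p)) : p \text{ a path with } l(p)=m\}$; for a polynomial $f$, $\sigma(f)=\bigcap_{m\in\operatorname{supp}(f)}\sigma(m)$ (so $\sigma(0)=V\times V$). $f$ is compatible with $Q$ if $\sigma(f)\neq\emptyset$, and uniformly compatible if it is compatible and all $m\in\operatorname{supp}(f)$ have the same set $\sigma(m)$; $R\langle X\rangle_Q$ is the set of uniformly compatible polynomials. For $F\subseteq R\langle X\rangle_Q$, a polynomial $f$ is a $Q$-consequence of $F$ if $f$ is compatible with $Q$ and there are finitely many $a_i,b_i\in R\langle X\rangle_Q$ and $f_i\in F$ with $f=\sum_i a_if_ib_i$ and $\sigma(a_if_ib_i)\supseteq\sigma(f)$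 for every $i$ (the empty sum is allowed). *)

theory Defs
  imports Main "HOL-Library.Poly_Mapping"
begin

text \<open>Noncommutative polynomials over R in indeterminates of type 'x:
  finitely supported maps from words ('x list, empty word = 1) to R.
  The first letter of a word is the leftmost factor.\<close>

type_synonym ('x, 'r) ncpoly = "'x list \<Rightarrow>\<^sub>0 'r"

definition nc_mult :: "('x, 'r::comm_ring_1) ncpoly \<Rightarrow> ('x, 'r) ncpoly \<Rightarrow> ('x, 'r) ncpoly" where
  "nc_mult a b = (\<Sum>u\<in>Poly_Mapping.keys a. \<Sum>v\<in>Poly_Mapping.keys b. Poly_Mapping.single (u @ v) (Poly_Mapping.lookup a u * Poly_Mapping.lookup b v))"

definition supp :: "('x, 'r::zero) ncpoly \<Rightarrow> 'x list set" where
  "supp f = Poly_Mapping.keys f"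

inductive_set nc_ideal :: "('x, 'r::comm_ring_1) ncpoly set \<Rightarrow> ('x, 'r) ncpoly set"
  for F where
  zero: "0 \<in> nc_ideal F"
| gen: "g \<in> F \<Longrightarrow> nc_mult (nc_mult a g) b \<in> nc_ideal F"
| add: "p \<in> nc_ideal F \<Longrightarrow> q \<in> nc_ideal F \<Longrightarrow> p + q \<in> nc_ideal F"

record ('v, 'e, 'x) quiver =
  verts :: "'v set"
  edges :: "'e set"
  src :: "'e \<Rightarrow> 'v"
  tgt :: "'e \<Rightarrow> 'v"
  lab :: "'e \<Rightarrow> 'x"

definition wf_quiver :: "('v, 'e, 'x) quiver \<Rightarrow> bool" where
  "wf_quiver Q \<longleftrightarrow> src Q ` edges Q \<subseteq> verts Q \<and> tgt Q ` edges Q \<subseteq> verts Q"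

text \<open>A nonempty path e_n ... e_1 is represented as the list [e_n, ..., e_1]:
  s(e_{i+1}) = t(e_i); label map l p; source s(last p); target t(hd p).\<close>
definition qpath :: "('v, 'e, 'x) quiver \<Rightarrow> 'e list \<Rightarrow> bool" where
  "qpath Q p \<longleftrightarrow> p \<noteq> [] \<and> set p \<subseteq> edges Q \<and>
     (\<forall>i. Suc i < length p \<longrightarrow> src Q (p ! i) = tgt Q (p ! Suc i))"

definition sigma_mon :: "('v, 'e, 'x) quiver \<Rightarrow> 'x list \<Rightarrow> ('v \<times> 'v) set" where
  "sigma_mon Q m =
     {(v, v) | v. v \<in> verts Q \<and> m = []} \<union>
     {(src Q (last p), tgt Q (hd p)) | p. qpath Q p \<and> map (lab Q) p = m}"

definition sigma :: "('v, 'e, 'x) quiver \<Rightarrow> ('x, 'r::zero) ncpoly \<Rightarrow> ('v \<times> 'v) set" where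
  "sigma Q f = (verts Q \<times> verts Q) \<inter> (\<Inter>m\<in>supp f. sigma_mon Q m)"

definition compatible :: "('v, 'e, 'x) quiver \<Rightarrow> ('x, 'r::zero) ncpoly \<Rightarrow> bool" where
  "compatible Q f \<longleftrightarrow> sigma Q f \<noteq> {}"

definition unif_compatible :: "('v, 'e, 'x) quiver \<Rightarrow> ('x, 'r::zero) ncpoly \<Rightarrow> bool" where
  "unif_compatible Q f \<longleftrightarrow> compatible Q f \<and>
     (\<forall>m\<in>supp f. \<forall>m'\<in>supp f. sigma_mon Q m = sigma_mon Q m')"

definition Q_consequence :: "('v, 'e, 'x) quiver \<Rightarrow> ('x, 'r::comm_ring_1) ncpoly set
    \<Rightarrow> ('x, 'r) ncpoly \<Rightarrow> bool" where
  "Q_consequence Q F f \<longleftrightarrow> compatible Q f \<and>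
     (\<exists>ts :: (('x, 'r) ncpoly \<times> ('x, 'r) ncpoly \<times> ('x, 'r) ncpoly) list.
        f = sum_list (map (\<lambda>(a, g, b). nc_mult (nc_mult a g) b) ts) \<and>
        (\<forall>(a, g, b) \<in> set ts. unif_compatible Q a \<and> unif_compatible Q b \<and> g \<in> F \<and>
            sigma Q f \<subseteq> sigma Q (nc_mult (nc_mult a g) b)))"

end

theory Submission
  imports Defs
begin

lemma nc_mult_eq:
  assumes "finite S" "Poly_Mapping.keys a \<subseteq> S" "finite T" "Poly_Mapping.keys b \<subseteq> T"
  shows "nc_mult a b = (\<Sum>u\<in>S. \<Sum>v\<in>T. Poly_Mapping.single (u @ v) (Poly_Mapping.lookup a u * Poly_Mapping.lookup b v))"
proof -
  have 1: "(\<Sum>v\<in>Poly_Mapping.keys b. Poly_Mapping.single (u @ v) (Poly_Mapping.lookup a u * Poly_Mapping.lookup b v))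
     = (\<Sum>v\<in>T. Poly_Mapping.single (u @ v) (Poly_Mapping.lookup a u * Poly_Mapping.lookup b v))" for u
    by (rule sum.mono_neutral_left) (use assms in \<open>auto simp: in_keys_iff\<close>)
  have 2: "(\<Sum>u\<in>Poly_Mapping.keys a. \<Sum>v\<in>T. Poly_Mapping.single (u @ v) (Poly_Mapping.lookup a u * Poly_Mapping.lookup b v))
     = (\<Sum>u\<in>S. \<Sum>v\<in>T. Poly_Mapping.single (u @ v) (Poly_Mapping.lookup a u * Poly_Mapping.lookup b v))"
    by (rule sum.mono_neutral_left) (use assms in \<open>auto simp: in_keys_iff\<close>)
  show ?thesis unfolding nc_mult_def 1 2 ..
qed

lemma nc_mult_add_left: "nc_mult (a + a') b = nc_mult a b + nc_mult a' b"
proof -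
  let ?S = "Poly_Mapping.keys a \<union> Poly_Mapping.keys a'"
  have k: "Poly_Mapping.keys (a + a') \<subseteq> ?S" by (rule keys_add)
  show ?thesis
    apply (subst (1 2 3) nc_mult_eq[where S="?S" and T="Poly_Mapping.keys b"])
    using k by (auto simp: lookup_add distrib_right single_add sum.distrib)
qed

lemma nc_mult_add_right: "nc_mult a (b + b') = nc_mult a b + nc_mult a b'"
proof -
  let ?T = "Poly_Mapping.keys b \<union> Poly_Mapping.keys b'"
  have k: "Poly_Mapping.keys (b + b') \<subseteq> ?T" by (rule keys_add)
  show ?thesis
    apply (subst (1 2 3) nc_mult_eq[where T="?T" and S="Poly_Mapping.keys a"])
    using k by (auto simp: lookup_add distrib_left single_add sum.distrib)
qed

lemma nc_mult_0_left[simp]: "nc_mult 0 b = 0" by (simp add: nc_mult_def)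
lemma nc_mult_0_right[simp]: "nc_mult a 0 = 0" by (simp add: nc_mult_def)

lemma keys_nc_mult: "Poly_Mapping.keys (nc_mult a b) \<subseteq> {u @ v | u v. u \<in> Poly_Mapping.keys a \<and> v \<in> Poly_Mapping.keys b}"
  unfolding nc_mult_def
  apply (rule order.trans[OF keys_sum])
  apply (rule UN_least)
  apply (rule order.trans[OF keys_sum])
  by auto

lemma poly_as_sum: "a = (\<Sum>u\<in>Poly_Mapping.keys a. Poly_Mapping.single u (Poly_Mapping.lookup a u))"
  by (rule poly_mapping_eqI) (auto simp: lookup_sum lookup_single when_def in_keys_iff)

lemma lookup_sum_list: "Poly_Mapping.lookup (sum_list (map h xs)) m = sum_list (map (\<lambda>x. Poly_Mapping.lookup (h x) m) xs)"
  by (induction xs) (auto simp: lookup_add)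

lemma sum_list_filter: "sum_list (map h (filter p xs)) = sum_list (map (\<lambda>x. if p x then h x else 0) xs)"
  by (induction xs) auto

lemma sum_list_zero: "(\<And>x. x \<in> set xs \<Longrightarrow> h x = 0) \<Longrightarrow> sum_list (map h xs) = 0"
  by (induction xs) auto


lemma qpath_alt: "qpath Q p \<longleftrightarrow> p \<noteq> [] \<and> set p \<subseteq> edges Q \<and> successively (\<lambda>e e'. src Q e = tgt Q e') p"
  unfolding qpath_def successively_conv_nth by auto

lemma sigma_mon_sub:
  assumes "wf_quiver Q" shows "sigma_mon Q m \<subseteq> verts Q \<times> verts Q"
proof
  fix z assume "z \<in> sigma_mon Q m"
  then show "z \<in> verts Q \<times> verts Q"
    unfolding sigma_mon_def
  proof (elim UnE CollectE exE conjE)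
    fix p assume "z = (src Q (last p), tgt Q (hd p))" "qpath Q p"
    then have "last p \<in> edges Q" "hd p \<in> edges Q" unfolding qpath_def by auto
    then show ?thesis using assms \<open>z = _\<close> unfolding wf_quiver_def by auto
  qed auto
qed

lemma sigma_mon_append:
  assumes wf: "wf_quiver Q"
  shows "sigma_mon Q (x @ y) = sigma_mon Q y O sigma_mon Q x"
proof
  have E: "e \<in> edges Q \<Longrightarrow> src Q e \<in> verts Q \<and> tgt Q e \<in> verts Q" for e
    using wf unfolding wf_quiver_def by auto
  show "sigma_mon Q (x @ y) \<subseteq> sigma_mon Q y O sigma_mon Q x"
  proof
    fix z assume "z \<in> sigma_mon Q (x @ y)"
    then consider a where "z = (a, a)" "a \<in> verts Q" "x = []" "y = []"
      | p where "z = (src Q (last p), tgt Q (hd p))" "qpath Q p" "map (lab Q) p = x @ y"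
      unfolding sigma_mon_def by auto
    then show "z \<in> sigma_mon Q y O sigma_mon Q x"
    proof cases
      case 1 then show ?thesis unfolding sigma_mon_def by auto
    next
      case 2
      then obtain p1 p2 where pp: "p = p1 @ p2" "map (lab Q) p1 = x" "map (lab Q) p2 = y"
        by (auto simp: map_eq_append_conv)
      have hdE: "hd p \<in> edges Q" "last p \<in> edges Q" using 2 unfolding qpath_def by auto
      show ?thesis
      proof (cases "p1 = []")
        case True
        then have "(src Q (last p), tgt Q (hd p)) \<in> sigma_mon Q y"
          using 2 pp unfolding sigma_mon_def by auto
        moreover have "(tgt Q (hd p), tgt Q (hd p)) \<in> sigma_mon Q x"
          using True pp E[OF hdE(1)] unfolding sigma_mon_def by auto
        ultimately show ?thesis using 2 by auto
      next
        case F1: False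
        show ?thesis
        proof (cases "p2 = []")
          case True
          then have "(src Q (last p), tgt Q (hd p)) \<in> sigma_mon Q x"
            using 2 pp unfolding sigma_mon_def by auto
          moreover have "(src Q (last p), src Q (last p)) \<in> sigma_mon Q y"
            using True pp E[OF hdE(2)] unfolding sigma_mon_def by auto
          ultimately show ?thesis using 2 by auto
        next
          case False
          have q: "qpath Q p1" "qpath Q p2" "src Q (last p1) = tgt Q (hd p2)"
            using 2(2) F1 False unfolding pp qpath_alt by (auto simp: successively_append_iff)
          have "(src Q (last p), src Q (last p1)) \<in> sigma_mon Q y"
            unfolding sigma_mon_def using q pp False by (auto intro!: exI[of _ p2])
          moreover have "(src Q (last p1), tgt Q (hd p)) \<in> sigma_mon Q x"
            unfolding sigma_mon_def using q pp F1 by (auto intro!: exI[of _ p1])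
          ultimately show ?thesis using 2 by auto
        qed
      qed
    qed
  qed
next
  show "sigma_mon Q y O sigma_mon Q x \<subseteq> sigma_mon Q (x @ y)"
  proof
    fix z assume "z \<in> sigma_mon Q y O sigma_mon Q x"
    then obtain a b c where z: "z = (a, c)" and ab: "(a, b) \<in> sigma_mon Q y" and bc: "(b, c) \<in> sigma_mon Q x"
      by auto
    show "z \<in> sigma_mon Q (x @ y)"
    proof (cases "y = [] \<and> a = b")
      case True then show ?thesis using z bc by simp
    next
      case Fy: False
      then obtain p2 where p2: "qpath Q p2" "map (lab Q) p2 = y" "a = src Q (last p2)" "b = tgt Q (hd p2)"
        using ab unfolding sigma_mon_def by auto
      show ?thesis
      proof (cases "x = [] \<and> b = c")
        case True then show ?thesis using z ab by simp
      next
        case False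
        then obtain p1 where p1: "qpath Q p1" "map (lab Q) p1 = x" "b = src Q (last p1)" "c = tgt Q (hd p1)"
          using bc unfolding sigma_mon_def by auto
        have "qpath Q (p1 @ p2)" using p1 p2 unfolding qpath_alt
          by (auto simp: successively_append_iff)
        then show ?thesis unfolding sigma_mon_def z using p1 p2
          by (auto intro!: exI[of _ "p1 @ p2"] simp: qpath_def)
      qed
    qed
  qed
qed


definition goodrep :: "('x, 'r::comm_ring_1) ncpoly set \<Rightarrow> (('x, 'r) ncpoly \<times> ('x, 'r) ncpoly \<times> ('x, 'r) ncpoly) list \<Rightarrow> bool" where
  "goodrep F ts \<longleftrightarrow> (\<forall>(a, g, b) \<in> set ts. g \<in> F \<and> (\<exists>u c. a = Poly_Mapping.single u c) \<and> (\<exists>v d. b = Poly_Mapping.single v d))"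

definition Rep :: "('x, 'r::comm_ring_1) ncpoly set \<Rightarrow> ('x, 'r) ncpoly set" where
  "Rep F = {h. \<exists>ts. h = sum_list (map (\<lambda>(a, g, b). nc_mult (nc_mult a g) b) ts) \<and> goodrep F ts}"

lemma Rep_0: "0 \<in> Rep F"
  unfolding Rep_def goodrep_def by (auto intro!: exI[of _ "[]"])

lemma Rep_add: "p \<in> Rep F \<Longrightarrow> q \<in> Rep F \<Longrightarrow> p + q \<in> Rep F"
  unfolding Rep_def goodrep_def
  apply clarify
  subgoal for ts ts' by (rule exI[of _ "ts @ ts'"]) auto
  done

lemma Rep_single: "g \<in> F \<Longrightarrow> nc_mult (nc_mult (Poly_Mapping.single u c) g) (Poly_Mapping.single v d) \<in> Rep F"
  unfolding Rep_def goodrep_def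
  by (rule CollectI, rule exI[of _ "[(Poly_Mapping.single u c, g, Poly_Mapping.single v d)]"]) auto

lemma Rep_gen:
  assumes g: "g \<in> F"
  shows "nc_mult (nc_mult a g) b \<in> Rep F"
proof -
  have B: "nc_mult (nc_mult (Poly_Mapping.single u c) g) (\<Sum>v\<in>S. Poly_Mapping.single v (h v)) \<in> Rep F"
    if "finite S" for S u c and h :: "'a list \<Rightarrow> 'b"
    using that
  proof (induction S rule: finite_induct)
    case empty then show ?case by (simp add: Rep_0)
  next
    case (insert x S)
    then show ?case by (simp add: nc_mult_add_right Rep_add Rep_single g)
  qed
  have A: "nc_mult (nc_mult (\<Sum>u\<in>S. Poly_Mapping.single u (h u)) g) b \<in> Rep F"
    if "finite S" for S and h :: "'a list \<Rightarrow> 'b"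
    using that
  proof (induction S rule: finite_induct)
    case empty then show ?case by (simp add: Rep_0)
  next
    case (insert x S)
    have "nc_mult (nc_mult (Poly_Mapping.single x (h x)) g) b \<in> Rep F"
      using B[of "Poly_Mapping.keys b" x "h x" "Poly_Mapping.lookup b"] poly_as_sum[of b, symmetric] by simp
    then show ?case using insert by (simp add: nc_mult_add_left Rep_add)
  qed
  show ?thesis using A[of "Poly_Mapping.keys a" "Poly_Mapping.lookup a"] poly_as_sum[of a, symmetric] by simp
qed

lemma ideal_Rep: "f \<in> nc_ideal F \<Longrightarrow> f \<in> Rep F"
  by (induction rule: nc_ideal.induct) (auto simp: Rep_0 Rep_add Rep_gen)

lemma keys_term:
  "Poly_Mapping.keys (nc_mult (nc_mult (Poly_Mapping.single u c) g) (Poly_Mapping.single v d))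
     \<subseteq> {(u @ m) @ v | m. m \<in> Poly_Mapping.keys g}"
proof
  fix z assume z: "z \<in> Poly_Mapping.keys (nc_mult (nc_mult (Poly_Mapping.single u c) g) (Poly_Mapping.single v d))"
  obtain x y where xy: "z = x @ y" "x \<in> Poly_Mapping.keys (nc_mult (Poly_Mapping.single u c) g)"
     "y \<in> Poly_Mapping.keys (Poly_Mapping.single v d)"
    using keys_nc_mult z by blast
  have y: "y = v" using xy(3) by (simp split: if_splits)
  obtain u' m where um: "x = u' @ m" "u' \<in> Poly_Mapping.keys (Poly_Mapping.single u c)" "m \<in> Poly_Mapping.keys g"
    using keys_nc_mult xy(2) by blast
  have "u' = u" using um(2) by (simp split: if_splits)
  then show "z \<in> {(u @ m) @ v | m. m \<in> Poly_Mapping.keys g}" using xy y um by blast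
qed

lemma uniform_term:
  assumes wf: "wf_quiver Q" and g: "unif_compatible Q g"
    and m1: "m1 \<in> Poly_Mapping.keys (nc_mult (nc_mult (Poly_Mapping.single u c) g) (Poly_Mapping.single v d))"
    and m2: "m2 \<in> Poly_Mapping.keys (nc_mult (nc_mult (Poly_Mapping.single u c) g) (Poly_Mapping.single v d))"
  shows "sigma_mon Q m1 = sigma_mon Q m2"
proof -
  obtain x y where "m1 = (u @ x) @ v" "m2 = (u @ y) @ v" "x \<in> Poly_Mapping.keys g" "y \<in> Poly_Mapping.keys g"
  proof -
    from subsetD[OF keys_term m1] obtain x where "m1 = (u @ x) @ v" "x \<in> Poly_Mapping.keys g" by blast
    moreover from subsetD[OF keys_term m2] obtain y where "m2 = (u @ y) @ v" "y \<in> Poly_Mapping.keys g" by blast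
    ultimately show ?thesis using that by blast
  qed
  moreover then have "sigma_mon Q x = sigma_mon Q y" using g unfolding unif_compatible_def supp_def by blast
  ultimately show ?thesis by (simp add: sigma_mon_append[OF wf])
qed


lemma sigma_sub_mon: "m \<in> Poly_Mapping.keys T \<Longrightarrow> sigma Q T \<subseteq> sigma_mon Q m"
  unfolding sigma_def supp_def by auto

lemma key_fact:
  assumes wf: "wf_quiver Q" and g: "unif_compatible Q g"
    and m: "m \<in> Poly_Mapping.keys (nc_mult (nc_mult (Poly_Mapping.single u c) g) (Poly_Mapping.single v d))"
    and P: "P \<subseteq> verts Q \<times> verts Q"
  shows "P \<subseteq> sigma Q (nc_mult (nc_mult (Poly_Mapping.single u c) g) (Poly_Mapping.single v d)) \<longleftrightarrow> P \<subseteq> sigma_mon Q m"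
proof
  assume "P \<subseteq> sigma Q (nc_mult (nc_mult (Poly_Mapping.single u c) g) (Poly_Mapping.single v d))"
  then show "P \<subseteq> sigma_mon Q m" using sigma_sub_mon[OF m] by blast
next
  assume "P \<subseteq> sigma_mon Q m"
  then show "P \<subseteq> sigma Q (nc_mult (nc_mult (Poly_Mapping.single u c) g) (Poly_Mapping.single v d))"
    using uniform_term[OF wf g m] P unfolding sigma_def supp_def by auto
qed

lemma unif_single:
  assumes wf: "wf_quiver Q" and c: "c \<noteq> 0" and u: "sigma_mon Q u \<noteq> {}"
  shows "unif_compatible Q (Poly_Mapping.single u c)"
proof -
  have "sigma Q (Poly_Mapping.single u c) = sigma_mon Q u"
    using c sigma_mon_sub[OF wf, of u] unfolding sigma_def supp_def by auto
  then show ?thesis using u c unfolding unif_compatible_def compatible_def supp_def by auto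
qed

theorem corollary4p3:
  fixes F :: "('x, 'r::comm_ring_1) ncpoly set"
    and f :: "('x, 'r) ncpoly"
    and Q :: "('v, 'e, 'x) quiver"
  assumes "f \<in> nc_ideal F"
    and "wf_quiver Q"
    and "\<forall>g\<in>F. unif_compatible Q g"
  shows "compatible Q f \<longleftrightarrow> Q_consequence Q F f"
proof
  assume "Q_consequence Q F f" then show "compatible Q f" unfolding Q_consequence_def by simp
next
  assume comp: "compatible Q f"
  note wf = assms(2)
  define tm :: "('x, 'r) ncpoly \<times> ('x, 'r) ncpoly \<times> ('x, 'r) ncpoly \<Rightarrow> ('x, 'r) ncpoly"
    where "tm = (\<lambda>(a, g, b). nc_mult (nc_mult a g) b)"
  define P where "P = sigma Q f"
  have Pne: "P \<noteq> {}" using comp unfolding compatible_def P_def .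
  have PV: "P \<subseteq> verts Q \<times> verts Q" unfolding P_def sigma_def by auto
  obtain ts where f: "f = sum_list (map tm ts)" and gr: "goodrep F ts"
    using ideal_Rep[OF assms(1)] unfolding Rep_def tm_def by blast
  have shape: "\<exists>u c g v d. t = (Poly_Mapping.single u c, g, Poly_Mapping.single v d) \<and> g \<in> F \<and> unif_compatible Q g"
    if "t \<in> set ts" for t
    using gr that assms(3) unfolding goodrep_def by fastforce
  define good where "good t \<longleftrightarrow> tm t \<noteq> 0 \<and> P \<subseteq> sigma Q (tm t)" for t
  have eq: "f = sum_list (map tm (filter good ts))"
  proof (rule poly_mapping_eqI)
    fix m
    have R: "Poly_Mapping.lookup (sum_list (map tm (filter good ts))) m
        = sum_list (map (\<lambda>t. if good t then Poly_Mapping.lookup (tm t) m else 0) ts)"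
      unfolding sum_list_filter lookup_sum_list by (intro arg_cong[where f=sum_list] map_cong) auto
    have L: "Poly_Mapping.lookup f m = sum_list (map (\<lambda>t. Poly_Mapping.lookup (tm t) m) ts)"
      unfolding f lookup_sum_list ..
    show "Poly_Mapping.lookup f m = Poly_Mapping.lookup (sum_list (map tm (filter good ts))) m"
    proof (cases "P \<subseteq> sigma_mon Q m")
      case True
      have "Poly_Mapping.lookup (tm t) m = (if good t then Poly_Mapping.lookup (tm t) m else 0)"
        if t: "t \<in> set ts" for t
      proof (cases "Poly_Mapping.lookup (tm t) m = 0")
        case False
        then have mk: "m \<in> Poly_Mapping.keys (tm t)" by (simp add: in_keys_iff)
        from shape[OF t] obtain u c g v d where
          tt: "t = (Poly_Mapping.single u c, g, Poly_Mapping.single v d)" "unif_compatible Q g" by blast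
        have "P \<subseteq> sigma Q (tm t)"
          using key_fact[OF wf tt(2) _ PV] mk True unfolding tt tm_def by simp
        moreover have "tm t \<noteq> 0" using mk by auto
        ultimately show ?thesis unfolding good_def by simp
      qed simp
      then show ?thesis unfolding L R by (intro arg_cong[where f=sum_list] map_cong) auto
    next
      case False
      have "(if good t then Poly_Mapping.lookup (tm t) m else 0) = 0" if "t \<in> set ts" for t
      proof (rule ccontr)
        assume "(if good t then Poly_Mapping.lookup (tm t) m else 0) \<noteq> 0"
        then have "good t" "m \<in> Poly_Mapping.keys (tm t)" by (auto simp: in_keys_iff split: if_splits)
        then show False using sigma_sub_mon[of m "tm t" Q] False unfolding good_def by blast
      qed
      then have "Poly_Mapping.lookup (sum_list (map tm (filter good ts))) m = 0"
        unfolding R by (rule sum_list_zero)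
      moreover have "Poly_Mapping.lookup f m = 0"
      proof (rule ccontr)
        assume "Poly_Mapping.lookup f m \<noteq> 0"
        then have "m \<in> Poly_Mapping.keys f" by (simp add: in_keys_iff)
        then show False using sigma_sub_mon[of m f Q] False unfolding P_def by blast
      qed
      ultimately show ?thesis by simp
    qed
  qed
  have props: "unif_compatible Q a \<and> unif_compatible Q b \<and> g \<in> F \<and> sigma Q f \<subseteq> sigma Q (nc_mult (nc_mult a g) b)"
    if t: "(a, g, b) \<in> set (filter good ts)" for a g b
  proof -
    have t1: "(a, g, b) \<in> set ts" and gd: "good (a, g, b)" using t by auto
    from shape[OF t1] obtain u c v d where
      tt: "a = Poly_Mapping.single u c" "b = Poly_Mapping.single v d" "g \<in> F" "unif_compatible Q g" by blast
    have nz: "nc_mult (nc_mult a g) b \<noteq> 0" and Ps: "P \<subseteq> sigma Q (nc_mult (nc_mult a g) b)"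
      using gd unfolding good_def tm_def by auto
    have c: "c \<noteq> 0" using nz tt by auto
    have d: "d \<noteq> 0" using nz tt by auto
    obtain m where m: "m \<in> Poly_Mapping.keys (nc_mult (nc_mult a g) b)" using nz by fastforce
    from subsetD[OF keys_term m[unfolded tt]] obtain x where mx: "m = (u @ x) @ v" by blast
    have "P \<subseteq> sigma_mon Q m" using Ps sigma_sub_mon[OF m] by blast
    then have "sigma_mon Q v O (sigma_mon Q x O sigma_mon Q u) \<noteq> {}"
      using Pne unfolding mx sigma_mon_append[OF wf] by auto
    then have "sigma_mon Q u \<noteq> {}" "sigma_mon Q v \<noteq> {}" by auto
    then show ?thesis using unif_single[OF wf c] unif_single[OF wf d] tt Ps unfolding P_def by auto
  qed
  show "Q_consequence Q F f"
    unfolding Q_consequence_def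
    apply (rule conjI[OF comp])
    apply (rule exI[of _ "filter good ts"])
    apply (rule conjI)
    subgoal using eq unfolding tm_def .
    subgoal using props by blast
    done
qed

end
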